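(* There is a family $(s_n)_{n\ge1}$ of unranked ordered labeled trees such that $|\mathrm{dag}(s_n)| > \frac16 |\mathrm{hdag}(s_n)|^2$ for all $n\ge 1$.
   Context: An unranked tree over a finite alphabet $\Sigma$ is a finite rooted tree with nodes labeled in $\Sigma$ and linearly ordered children. $\mathrm{dag}(t)$ is the minimal dag of $t$: its nodes are the distinct subtrees of $t$, the node of a subtree $f(s_1,\dots,s_k)$ having $k$ ordered edges to the nodes of $s_1,\dots,s_k$; $|\mathrm{dag}(t)|$ is its number of edges. The first-child/next-sibling encoding $\mathrm{fcns}$ maps a sequence of unranked trees to a binary tree (optional left and right child): $\mathrm{fcns}(\varepsilon)$ is empty and $\mathrm{fcns}(t_1\cdots t_n)=f(\mathrm{fcns}(u_1\cdots u_m),\mathrm{fcns}(t_2\cdots t_n))$ when $t_1=f(u_1,\dots,u_m)$. Hybrid dag: for each distinct subtree $s=f(s_1,\dots,s_k)$ of $t$ with $k\ge1$ introduce a fresh symbol $A_s$ and the height-one tree $\rho_s=f(\alpha_1,\dots,\alpha_k)$, where $\alpha_i$ is the label of $s_i$ if $s_i$ is a single node and $\alpha_i=A_{s_i}$ otherwise. Let $\rho'_s$ be $\rho_s$ with root additionally marked by $A_s$. $\mathrm{hdag}(t)$ is the minimal dag of the forest of binary trees $\mathrm{fcns}(\rho'_s)$ (identical subtrees merged), and $|\mathrm{hdag}(t)|$ its number of edges, not counting edges to absent children. *)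

theory Defs
  imports Complex_Main
begin

datatype 'a utree = UNode (label: 'a) (children: "'a utree list")

fun subtrees :: "'a utree \<Rightarrow> 'a utree set" where
  "subtrees (UNode f ts) = insert (UNode f ts) (\<Union>t\<in>set ts. subtrees t)"

fun labels :: "'a utree \<Rightarrow> 'a set" where
  "labels (UNode f ts) = insert f (\<Union>t\<in>set ts. labels t)"

text \<open>Number of edges of the minimal dag: one node per distinct subtree,
  each with as many (ordered) edges as it has children.\<close>
definition dag_size :: "'a utree \<Rightarrow> nat" where
  "dag_size t = (\<Sum>s\<in>subtrees t. length (children s))"

datatype 'b btree = BNode 'b "'b btree option" "'b btree option"

text \<open>First-child/next-sibling encoding of a sequence of unranked trees.\<close>
fun fcns :: "'a utree list \<Rightarrow> 'a btree option" where
  "fcns [] = None"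
| "fcns (UNode f us # ts) = Some (BNode f (fcns us) (fcns ts))"

fun bsubtrees :: "'b btree \<Rightarrow> 'b btree set" where
  "bsubtrees (BNode x l r) = insert (BNode x l r)
      ((\<Union>c\<in>set_option l. bsubtrees c) \<union> (\<Union>c\<in>set_option r. bsubtrees c))"

fun bedges :: "'b btree \<Rightarrow> nat" where
  "bedges (BNode x l r) = (if l = None then 0 else 1) + (if r = None then 0 else 1)"

text \<open>Labels of the hybrid-dag rules: an original symbol, a fresh nonterminal
  \<open>A_s\<close>, or an original symbol \<open>f\<close> at a root additionally marked by \<open>A_s\<close>.\<close>
datatype 'a hlab = Sym 'a | NT "'a utree" | Marked 'a "'a utree"

definition alpha :: "'a utree \<Rightarrow> 'a hlab" where
  "alpha c = (if children c = [] then Sym (label c) else NT c)"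

definition rho' :: "'a utree \<Rightarrow> 'a hlab utree" where
  "rho' s = UNode (Marked (label s) s) (map (\<lambda>c. UNode (alpha c) []) (children s))"

definition hdag_nodes :: "'a utree \<Rightarrow> 'a hlab btree set" where
  "hdag_nodes t = (\<Union>s\<in>{s\<in>subtrees t. children s \<noteq> []}. \<Union>b\<in>set_option (fcns [rho' s]). bsubtrees b)"

definition hdag_size :: "'a utree \<Rightarrow> nat" where
  "hdag_size t = (\<Sum>b\<in>hdag_nodes t. bedges b)"

end

theory Submission
  imports Defs
begin

abbreviation leaf :: "nat utree" where "leaf \<equiv> UNode 0 []"

fun ch :: "nat \<Rightarrow> nat \<Rightarrow> nat utree list" where
  "ch b 0 = replicate b leaf"
| "ch b (Suc i) = UNode 1 (ch b i) # ch b i"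

definition uu :: "nat \<Rightarrow> nat \<Rightarrow> nat utree" where
  "uu b i = UNode 1 (ch b i)"

lemma length_ch[simp]: "length (ch b i) = i + b"
  by (induction i) auto

lemma uu_inj: "uu b i = uu b j \<Longrightarrow> i = j"
  unfolding uu_def by (metis length_ch add_right_cancel utree.inject)

lemma sub_ch: "b > 0 \<Longrightarrow> (\<Union>t\<in>set (ch b i). subtrees t) = insert leaf (uu b ` {..<i})"
proof (induction i)
  case 0 then show ?case by auto
next
  case (Suc i)
  have "(\<Union>t\<in>set (ch b (Suc i)). subtrees t) = subtrees (uu b i) \<union> (\<Union>t\<in>set (ch b i). subtrees t)"
    by (simp add: uu_def)
  also have "\<dots> = insert (uu b i) (insert leaf (uu b ` {..<i}))"
    using Suc by (auto simp: uu_def)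
  finally show ?case by (auto simp: lessThan_Suc uu_def)
qed

lemma subtrees_uu: "b > 0 \<Longrightarrow> subtrees (uu b c) = insert leaf (uu b ` {..c})"
proof -
  assume b: "b > 0"
  have "subtrees (uu b c) = insert (uu b c) (\<Union>t\<in>set (ch b c). subtrees t)"
    by (simp add: uu_def)
  also have "\<dots> = insert leaf (uu b ` {..c})" using sub_ch[OF b, of c]
    by (auto simp: lessThan_Suc_atMost[symmetric] lessThan_Suc)
  finally show ?thesis .
qed

lemma labels_ch: "\<forall>t\<in>set (ch b i). labels t \<subseteq> {0,1}"
  by (induction i) auto

lemma labels_uu: "labels (uu b i) \<subseteq> {0,1}"
  using labels_ch[of b i] by (auto simp: uu_def)

lemma ch_ne[simp]: "b > 0 \<Longrightarrow> ch b j \<noteq> []"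
  by (metis length_ch add_is_0 list.size(3) not_gr0)

lemma children_uu[simp]: "children (uu b i) = ch b i" "label (uu b i) = 1"
  by (auto simp: uu_def)

lemma leaf_notin: "b > 0 \<Longrightarrow> leaf \<notin> uu b ` A"
  by (auto simp: uu_def)

lemma dag_uu: "b > 0 \<Longrightarrow> dag_size (uu b c) = (\<Sum>j\<le>c. j + b)"
proof -
  assume b: "b > 0"
  have inj: "inj_on (uu b) {..c}" by (meson inj_onI uu_inj)
  have "dag_size (uu b c) = (\<Sum>s\<in>insert leaf (uu b ` {..c}). length (children s))"
    unfolding dag_size_def subtrees_uu[OF b] ..
  also have "\<dots> = (\<Sum>s\<in>uu b ` {..c}. length (children s))"
    using leaf_notin[OF b] by (simp)
  also have "\<dots> = (\<Sum>j\<le>c. j + b)" by (simp add: sum.reindex[OF inj])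
  finally show ?thesis .
qed

lemma sum_form: "2 * (\<Sum>j\<le>c. j + b) = c * (c+1) + 2 * (c+1) * (b::nat)"
  by (induction c) (auto simp: algebra_simps)

fun bl :: "'b list \<Rightarrow> 'b btree option" where
  "bl [] = None"
| "bl (x # xs) = Some (BNode x None (bl xs))"

lemma fcns_map: "fcns (map (\<lambda>c. UNode (f c) []) xs) = bl (map f xs)"
  by (induction xs) auto

definition bsub :: "'b list \<Rightarrow> 'b btree set" where
  "bsub xs = (\<Union>c\<in>set_option (bl xs). bsubtrees c)"

lemma bsub_Nil[simp]: "bsub [] = {}" by (simp add: bsub_def)
lemma bsub_Cons[simp]: "bsub (x # xs) = insert (BNode x None (bl xs)) (bsub xs)"
  by (simp add: bsub_def)

lemma finite_bsub[simp]: "finite (bsub xs)" by (induction xs) auto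

fun blen :: "'b btree \<Rightarrow> nat" where
  "blen (BNode x l r) = 1 + (case r of None \<Rightarrow> 0 | Some r' \<Rightarrow> blen r')"

lemma bl_None: "(bl xs = None) = (xs = [])" by (cases xs) auto

lemma blen_bl: "(case bl xs of None \<Rightarrow> 0 | Some r \<Rightarrow> blen r) = length xs"
  by (induction xs) auto

lemma blen_bsub: "t \<in> bsub xs \<Longrightarrow> blen t \<le> length xs"
proof (induction xs)
  case Nil then show ?case by simp
next
  case (Cons x xs) then show ?case using blen_bl[of xs] by auto
qed

lemma sum_bsub: "(\<Sum>t\<in>bsub xs. bedges t) = length xs - 1"
proof (induction xs)
  case Nil then show ?case by simp
next
  case (Cons x xs)
  have nin: "BNode x None (bl xs) \<notin> bsub xs"
  proof
    assume "BNode x None (bl xs) \<in> bsub xs"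
    from blen_bsub[OF this] show False
      using blen_bl[of xs] by simp
  qed
  show ?case using nin Cons by (cases xs) (auto simp: bl_None)
qed

fun blab :: "'b btree \<Rightarrow> 'b" where "blab (BNode x l r) = x"

lemma blab_bsub: "t \<in> bsub xs \<Longrightarrow> blab t \<in> set xs"
  by (induction xs) auto

definition L :: "nat \<Rightarrow> nat \<Rightarrow> nat hlab list" where
  "L b j = map alpha (ch b j)"

lemma L_Suc: "b > 0 \<Longrightarrow> L b (Suc j) = NT (uu b j) # L b j"
proof -
  assume "b > 0" then have "ch b j \<noteq> []" by (metis length_ch add_is_0 list.size(3) not_gr0)
  then show ?thesis by (simp add: L_def alpha_def uu_def)
qed

lemma L_len[simp]: "length (L b j) = j + b" by (simp add: L_def)

lemma bsub_mono: "b > 0 \<Longrightarrow> bsub (L b j) \<subseteq> bsub (L b (j + k))"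
  by (induction k) (auto simp: L_Suc)

definition R :: "nat \<Rightarrow> nat \<Rightarrow> nat hlab btree" where
  "R b j = BNode (Marked 1 (uu b j)) (bl (L b j)) None"

lemma fcns_rho: "set_option (fcns [rho' (uu b j)]) = {R b j}"
  by (simp add: rho'_def fcns_map R_def L_def)

lemma bsubtrees_R: "bsubtrees (R b j) = insert (R b j) (bsub (L b j))"
  by (simp add: R_def bsub_def)

lemma hdag_nodes_uu: "b > 0 \<Longrightarrow> hdag_nodes (uu b c) = R b ` {..c} \<union> bsub (L b c)"
proof -
  assume b: "b > 0"
  have S: "{s\<in>subtrees (uu b c). children s \<noteq> []} = uu b ` {..c}"
    using b by (auto simp: subtrees_uu)
  have "hdag_nodes (uu b c) = (\<Union>j\<le>c. insert (R b j) (bsub (L b j)))"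
    unfolding hdag_nodes_def S by (simp add: fcns_rho bsubtrees_R)
  also have "\<dots> = R b ` {..c} \<union> bsub (L b c)"
  proof -
    have "\<And>j. j \<le> c \<Longrightarrow> bsub (L b j) \<subseteq> bsub (L b c)"
      using bsub_mono[OF b] by (metis le_add_diff_inverse)
    then show ?thesis by auto
  qed
  finally show ?thesis .
qed

lemma alpha_not_marked: "alpha c \<noteq> Marked f s" "Marked f s \<noteq> alpha c"
  by (simp_all add: alpha_def)

lemma hdag_uu: "b > 0 \<Longrightarrow> hdag_size (uu b c) = 2 * c + b"
proof -
  assume b: "b > 0"
  have disj: "R b ` {..c} \<inter> bsub (L b c) = {}"
  proof (rule ccontr)
    assume "R b ` {..c} \<inter> bsub (L b c) \<noteq> {}"
    then obtain j where "R b j \<in> bsub (L b c)" by auto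
    from blab_bsub[OF this] show False
      by (auto simp: R_def L_def alpha_not_marked)
  qed
  have inj: "inj_on (R b) {..c}" by (rule inj_onI) (auto simp: R_def dest: uu_inj)
  have e1: "\<And>j. bedges (R b j) = 1" using b by (simp add: R_def bl_None L_def)
  have "hdag_size (uu b c) = (\<Sum>t\<in>R b ` {..c}. bedges t) + (\<Sum>t\<in>bsub (L b c). bedges t)"
    unfolding hdag_size_def hdag_nodes_uu[OF b] by (rule sum.union_disjoint) (auto simp: disj)
  also have "\<dots> = (c + 1) + (c + b - 1)"
    by (simp add: sum.reindex[OF inj] e1 sum_bsub)
  finally show ?thesis using b by simp
qed

theorem theorem3:
  shows "\<exists>(\<Sigma>::nat set) (s::nat \<Rightarrow> nat utree).
           finite \<Sigma> \<and> (\<forall>n\<ge>1. labels (s n) \<subseteq> \<Sigma>) \<and> inj_on s {1..} \<and>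
           (\<forall>n\<ge>1. real (dag_size (s n)) > (1/6) * (real (hdag_size (s n)))^2)"
proof (intro exI conjI)
  show "finite {0::nat,1}" by simp
  show "\<forall>n\<ge>1. labels (uu n n) \<subseteq> {0,1}" using labels_uu by blast
  show "inj_on (\<lambda>n. uu n n) {1..}"
    by (rule inj_onI) (auto simp: uu_def dest!: arg_cong[where f="length"])
  show "\<forall>n\<ge>1. real (dag_size (uu n n)) > (1/6) * (real (hdag_size (uu n n)))^2"
  proof (intro allI impI)
    fix n :: nat assume n: "n \<ge> 1"
    then have b: "n > 0" by simp
    have D: "2 * dag_size (uu n n) = 3 * n * n + 3 * n"
      using sum_form[of n n] dag_uu[OF b, of n] by (simp add: algebra_simps)
    have H: "hdag_size (uu n n) = 3 * n" using hdag_uu[OF b, of n] by simp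
    have D': "real (dag_size (uu n n)) = (3 * real n * real n + 3 * real n) / 2"
      using arg_cong[OF D, of real] by simp
    show "real (dag_size (uu n n)) > (1/6) * (real (hdag_size (uu n n)))^2"
      unfolding D' H using b by (simp add: power2_eq_square)
  qed
qed

end
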